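(* Let $Y$ be a countable linear order, $F=\{a_0<\dots<a_{m-1}\}\in\mathsf{age}(Y)$, and $\alpha$ an ordinal. Then $\mathsf{rk}_Y(F)\ge\alpha$ if and only if $\mathsf{rk}(I_j)\ge\alpha$ for every interval $I_j$ ($0\le j\le m$) of $F$ in $Y$, each interval being regarded as a linear order in its own right. In particular, $\mathsf{rk}_Y(F)=\min\{\mathsf{rk}(I_j):0\le j\le m\}$.
   Context: The intervals of $F=\{a_0<\dots<a_{m-1}\}$ in $Y$ are $I_0=\{y\in Y:y<a_0\}$, $I_k=\{y\in Y:a_{k-1}<y<a_k\}$ for $1\le k\le m-1$, and $I_m=\{y\in Y:y>a_{m-1}\}$; if $F=\emptyset$ there is the single interval $I_0=Y$. Let $\mathcal F$ be the class of finite linear orders (language $\{<\}$); countable linear orders are the structures considered; substructures are suborders and $\mathsf{age}(X)$ is the set of finite suborders of $X$. For $A\le B$, $B$ is a prime extension of $A$ if $|B\setminus A|=1$; a realization of $B$ in $X$ (where $A\le X$) is $C\le X$ with $A\le C$ and an order-isomorphism $B\to C$ fixing $A$ pointwise. For $F\in\mathsf{age}(X)$ define by recursion: $\mathsf{rk}_X(F)\ge0$ always; $\mathsf{rk}_X(F)\ge\alpha+1$ iff every prime extension $B\in\mathcal F$ of $F$ has a realization $C$ in $X$ with $\mathsf{rk}_X(C)\ge\alpha$; for limit $\alpha$, $\mathsf{rk}_X(F)\ge\alpha$ iff $\mathsf{rk}_X(F)\ge\beta$ for all $\beta<\alpha$. $\mathsf{rk}_X(F)=\sup\{\alpha:\mathsf{rk}_X(F)\ge\alpha\}$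 (or $\infty$, larger than all ordinals), and $\mathsf{rk}(X)=\mathsf{rk}_X(\emptyset)$. *)

theory Defs
  imports "HOL-Library.Countable_Set"
begin

text \<open>A countable linear order is represented as a countable carrier set Y of a
linearly ordered type, with the induced order; suborders are subsets with the
induced order. A finite linear order B extending A by one point is represented,
up to isomorphism over A, by a strict linear order on insert None (Some ` A).\<close>

definition strict_linear_on :: "'b set \<Rightarrow> ('b \<Rightarrow> 'b \<Rightarrow> bool) \<Rightarrow> bool" where
  "strict_linear_on S s \<longleftrightarrow>
     (\<forall>x\<in>S. \<not> s x x) \<and>
     (\<forall>x\<in>S. \<forall>y\<in>S. \<forall>z\<in>S. s x y \<longrightarrow> s y z \<longrightarrow> s x z) \<and>
     (\<forall>x\<in>S. \<forall>y\<in>S. x \<noteq> y \<longrightarrow> s x y \<or> s y x)"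

definition prime_ext :: "'a::linorder set \<Rightarrow> ('a option \<Rightarrow> 'a option \<Rightarrow> bool) \<Rightarrow> bool" where
  "prime_ext A s \<longleftrightarrow> strict_linear_on (insert None (Some ` A)) s \<and>
     (\<forall>x\<in>A. \<forall>y\<in>A. s (Some x) (Some y) \<longleftrightarrow> x < y)"

definition realizes :: "'a::linorder set \<Rightarrow> 'a set \<Rightarrow> ('a option \<Rightarrow> 'a option \<Rightarrow> bool) \<Rightarrow> 'a set \<Rightarrow> bool" where
  "realizes X A s C \<longleftrightarrow> A \<subseteq> C \<and> C \<subseteq> X \<and>
     (\<exists>f. bij_betw f (insert None (Some ` A)) C \<and> (\<forall>x\<in>A. f (Some x) = x) \<and>
          (\<forall>u\<in>insert None (Some ` A). \<forall>v\<in>insert None (Some ` A). s u v \<longleftrightarrow> f u < f v))"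

text \<open>Ordinals are elements of an arbitrary well-ordered type 'o.
alpha is the successor of beta.\<close>
definition is_succ_of :: "'o::wellorder \<Rightarrow> 'o \<Rightarrow> bool" where
  "is_succ_of \<alpha> \<beta> \<longleftrightarrow> \<beta> < \<alpha> \<and> (\<forall>\<gamma>. \<gamma> < \<alpha> \<longrightarrow> \<gamma> \<le> \<beta>)"

text \<open>rk_ge X alpha F means rk_X(F) \<ge> alpha. The recursion on alpha is well-founded,
so the least fixed point below is the recursively defined predicate.
The rule lim covers alpha = 0 (vacuously) and limit alpha.\<close>
inductive rk_ge :: "'a::linorder set \<Rightarrow> 'o::wellorder \<Rightarrow> 'a set \<Rightarrow> bool" for X where
  lim: "(\<nexists>\<beta>. is_succ_of \<alpha> \<beta>) \<Longrightarrow> (\<forall>\<beta><\<alpha>. rk_ge X \<beta> F) \<Longrightarrow> rk_ge X \<alpha> F"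
| succ: "is_succ_of \<alpha> \<beta> \<Longrightarrow>
     (\<forall>s. prime_ext F s \<longrightarrow> (\<exists>C. realizes X F s C \<and> rk_ge X \<beta> C)) \<Longrightarrow> rk_ge X \<alpha> F"

text \<open>rk_X(F), represented as the down-closed set of ordinals alpha (in 'o) with
rk_X(F) \<ge> alpha; the value \<infinity> corresponds to UNIV. rk(X) = rk_X({}).\<close>
definition rk :: "'a::linorder set \<Rightarrow> 'a set \<Rightarrow> 'o::wellorder set" where
  "rk X F = {\<alpha>. rk_ge X \<alpha> F}"

definition interval :: "'a::linorder set \<Rightarrow> 'a set \<Rightarrow> nat \<Rightarrow> 'a set" where
  "interval Y F j = (let a = sorted_list_of_set F; m = length a in
     {y\<in>Y. (j = 0 \<or> a ! (j - 1) < y) \<and> (j = m \<or> y < a ! j)})"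

end

theory Submission
  imports Defs
begin


definition pos :: "'a::linorder set \<Rightarrow> 'a \<Rightarrow> nat" where
  "pos F y = card {x\<in>F. x < y}"

definition ivl :: "'a::linorder set \<Rightarrow> 'a set \<Rightarrow> nat \<Rightarrow> 'a set" where
  "ivl Y F j = {y\<in>Y. y \<notin> F \<and> pos F y = j}"

lemma pos_le: "finite F \<Longrightarrow> pos F y \<le> card F"
  unfolding pos_def by (rule card_mono) auto

lemma pos_less_mono: "finite F \<Longrightarrow> x \<in> F \<Longrightarrow> x < y \<Longrightarrow> pos F x < pos F y"
  unfolding pos_def by (rule psubset_card_mono) auto

lemma pos_mono: "finite F \<Longrightarrow> x \<le> y \<Longrightarrow> pos F x \<le> pos F y"
  unfolding pos_def by (rule card_mono) auto

lemma pos_lt_card: "finite F \<Longrightarrow> x \<in> F \<Longrightarrow> pos F x < card F"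
  unfolding pos_def by (rule psubset_card_mono) auto

lemma pos_inj: assumes "finite F" shows "inj_on (pos F) F"
proof (rule inj_onI)
  fix x y assume "x \<in> F" "y \<in> F" "pos F x = pos F y"
  then show "x = y"
    using pos_less_mono[OF assms, of x y] pos_less_mono[OF assms, of y x] by (cases x y rule: linorder_cases) auto
qed

lemma pos_image: assumes "finite F" shows "pos F ` F = {..<card F}"
proof (rule card_subset_eq)
  show "pos F ` F \<subseteq> {..<card F}" using pos_lt_card[OF assms] by auto
  show "card (pos F ` F) = card {..<card F}"
    using card_image[OF pos_inj[OF assms]] by simp
qed simp

lemma pos_iff_c: "finite F \<Longrightarrow> x \<in> F \<Longrightarrow> c \<notin> F \<Longrightarrow> pos F x < pos F c \<longleftrightarrow> x < c"
  using pos_less_mono[of F x c] pos_mono[of F c x] less_imp_le[of c x]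
  by (cases x c rule: linorder_cases) auto

lemma card_pos_less: assumes "finite F" "j \<le> card F"
  shows "card {x\<in>F. pos F x < j} = j"
proof -
  have "pos F ` {x\<in>F. pos F x < j} = {..<j}"
  proof
    show "pos F ` {x \<in> F. pos F x < j} \<subseteq> {..<j}" by auto
    show "{..<j} \<subseteq> pos F ` {x \<in> F. pos F x < j}"
    proof
      fix i assume "i \<in> {..<j}"
      then have "i \<in> pos F ` F" using pos_image[OF assms(1)] assms(2) by auto
      then show "i \<in> pos F ` {x \<in> F. pos F x < j}" using \<open>i \<in> {..<j}\<close> by auto
    qed
  qed
  moreover have "inj_on (pos F) {x\<in>F. pos F x < j}"
    using pos_inj[OF assms(1)] by (rule inj_on_subset) auto
  ultimately show ?thesis by (metis card_image card_lessThan)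
qed

lemma pos_nth:
  assumes "finite F" "i < card F"
  shows "pos F (sorted_list_of_set F ! i) = i"
proof -
  let ?a = "sorted_list_of_set F"
  have st: "sorted_wrt (<) ?a" by (simp add: sorted_list_of_set.strict_sorted_key_list_of_set)
  have len: "length ?a = card F" by simp
  have set: "set ?a = F" using assms by simp
  have ds: "distinct ?a" by simp
  have lt: "k < card F \<Longrightarrow> l < card F \<Longrightarrow> ?a ! k < ?a ! l \<longleftrightarrow> k < l" for k l
    using sorted_wrt_nth_less[OF st, of k l] sorted_wrt_nth_less[OF st, of l k] len
    by (cases k l rule: linorder_cases) auto
  have "{x\<in>F. x < ?a ! i} = (!) ?a ` {..<i}"
  proof
    show "{x \<in> F. x < ?a ! i} \<subseteq> (!) ?a ` {..<i}"
    proof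
      fix x assume "x \<in> {x \<in> F. x < ?a ! i}"
      then have "x \<in> set ?a" "x < ?a ! i" using set by auto
      then obtain k where k: "k < card F" "x = ?a ! k" "x < ?a ! i"
        using len by (auto simp: in_set_conv_nth)
      then have "k < i" using lt assms by auto
      then show "x \<in> (!) ?a ` {..<i}" using k by auto
    qed
    have mem: "k < card F \<Longrightarrow> ?a ! k \<in> F" for k using set len nth_mem[of k ?a] by simp
    show "(!) ?a ` {..<i} \<subseteq> {x \<in> F. x < ?a ! i}"
      using lt assms mem by auto
  qed
  moreover have "inj_on ((!) ?a) {..<i}"
    using inj_on_nth[OF ds] len assms by auto
  ultimately show ?thesis unfolding pos_def by (simp add: card_image)
qed

lemma interval_ivl:
  assumes "finite F" "j \<le> card F"
  shows "interval Y F j = ivl Y F j"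
proof -
  let ?a = "sorted_list_of_set F"
  let ?m = "card F"
  have set: "set ?a = F" using assms by simp
  have len: "length ?a = card F" by simp
  have K: "i < ?m \<Longrightarrow> ?a ! i < y \<longleftrightarrow> i < pos F y" for i y
  proof -
    assume i: "i < ?m"
    have inF: "?a ! i \<in> F" using nth_mem[of i ?a] set len i by simp
    show ?thesis
    proof
      assume "?a ! i < y"
      then have "pos F (?a ! i) < pos F y" by (rule pos_less_mono[OF assms(1) inF])
      then show "i < pos F y" using pos_nth[OF assms(1) i] by simp
    next
      assume "i < pos F y"
      show "?a ! i < y"
      proof (rule ccontr)
        assume "\<not> ?a ! i < y"
        then have "pos F y \<le> pos F (?a ! i)" using pos_mono[OF assms(1)] by simp
        then show False using \<open>i < pos F y\<close> pos_nth[OF assms(1) i] by simp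
      qed
    qed
  qed
  show ?thesis
  proof (rule set_eqI)
    fix y
    show "y \<in> interval Y F j \<longleftrightarrow> y \<in> ivl Y F j"
    proof (cases "y \<in> F")
      case True
      then have "y \<in> set ?a" using set by auto
      then obtain i where i: "i < ?m" "y = ?a ! i" using len by (auto simp: in_set_conv_nth)
      have p: "pos F y = i" using pos_nth[OF assms(1) i(1)] i by simp
      have "y \<notin> interval Y F j"
      proof
        assume "y \<in> interval Y F j"
        then have c1: "j = 0 \<or> ?a ! (j - 1) < y" and c2: "j = ?m \<or> y < ?a ! j"
          unfolding interval_def Let_def by auto
        show False
        proof (cases "j = ?m")
          case True
          then have "j \<noteq> 0" using i by auto
          then have "?a ! (j - 1) < y" using c1 by simp
          moreover have "j - 1 < ?m" using True i by simp
          ultimately have "j - 1 < i" using K[of "j-1" y] p by simp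
          then show False using True i by simp
        next
          case False
          then have jm: "j < ?m" using assms by simp
          then have "y < ?a ! j" using c2 False by simp
          then have "i < j" using K[OF i(1), of "?a ! j"] pos_nth[OF assms(1) jm] i(2) by simp
          moreover have "j - 1 < i" if "j \<noteq> 0"
          proof -
            have "?a ! (j - 1) < y" using c1 that by simp
            moreover have "j - 1 < ?m" using jm by simp
            ultimately show "j - 1 < i" using K[of "j-1" y] p by simp
          qed
          ultimately show False by linarith
        qed
      qed
      then show ?thesis using True unfolding ivl_def by auto
    next
      case False
      have pm: "pos F y \<le> ?m" using pos_le[OF assms(1)] .
      have K2: "i < ?m \<Longrightarrow> y < ?a ! i \<longleftrightarrow> pos F y \<le> i" for i
      proof -
        assume i: "i < ?m"
        have "?a ! i \<noteq> y" using False i set len by auto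
        then show ?thesis using K[OF i, of y] by auto
      qed
      have "(j = 0 \<or> ?a ! (j - 1) < y) \<and> (j = ?m \<or> y < ?a ! j) \<longleftrightarrow> pos F y = j"
      proof (cases "j = 0")
        case True
        show ?thesis
        proof (cases "?m = 0")
          case True
          then show ?thesis using pm \<open>j = 0\<close> by simp
        next
          case False
          then have "(y < ?a ! 0) = (pos F y \<le> 0)" using K2[of 0] by simp
          then show ?thesis using \<open>j = 0\<close> False by simp
        qed
      next
        case False
        have A1: "(?a ! (j - 1) < y) = (j \<le> pos F y)"
        proof -
          have "j - 1 < ?m" using False assms(2) by simp
          then have "(?a ! (j - 1) < y) = (j - 1 < pos F y)" by (rule K)
          also have "\<dots> = (j \<le> pos F y)" using False by linarith
          finally show ?thesis .
        qed
        show ?thesis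
        proof (cases "j = ?m")
          case True
          then show ?thesis using A1 False pm by auto
        next
          case jm: False
          then have "j < ?m" using assms(2) by simp
          then have "(y < ?a ! j) = (pos F y \<le> j)" by (rule K2)
          then show ?thesis using A1 False jm by auto
        qed
      qed
      then show ?thesis using False unfolding interval_def ivl_def Let_def by auto
    qed
  qed
qed



lemma realizes_iff:
  assumes ps: "prime_ext F s" and FX: "F \<subseteq> X"
  shows "realizes X F s C \<longleftrightarrow>
    (\<exists>c\<in>X. c \<notin> F \<and> C = insert c F \<and> (\<forall>x\<in>F. s (Some x) None \<longleftrightarrow> x < c))"
proof -
  let ?S = "insert None (Some ` F)"
  have sl: "strict_linear_on ?S s" and ord: "\<forall>x\<in>F. \<forall>y\<in>F. s (Some x) (Some y) \<longleftrightarrow> x < y"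
    using ps unfolding prime_ext_def by (rule conjunct1, rule conjunct2)
  have irr: "\<forall>x\<in>?S. \<not> s x x" using sl unfolding strict_linear_on_def by (rule conjunct1)
  have tr: "\<forall>x\<in>?S. \<forall>y\<in>?S. \<forall>z\<in>?S. s x y \<longrightarrow> s y z \<longrightarrow> s x z"
    using sl unfolding strict_linear_on_def by (elim conjE)
  have tot: "\<forall>x\<in>?S. \<forall>y\<in>?S. x \<noteq> y \<longrightarrow> s x y \<or> s y x"
    using sl unfolding strict_linear_on_def by (elim conjE)
  have asym: "s None (Some x) \<longleftrightarrow> \<not> s (Some x) None" if x: "x \<in> F" for x
  proof -
    have m: "Some x \<in> ?S" "None \<in> ?S" using x by auto
    have "s (Some x) None \<or> s None (Some x)" using bspec[OF bspec[OF tot m(1)] m(2)] by simp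
    moreover have "\<not> (s (Some x) None \<and> s None (Some x))"
    proof
      assume "s (Some x) None \<and> s None (Some x)"
      then have "s None None" using bspec[OF bspec[OF bspec[OF tr m(2)] m(1)] m(2)] by blast
      then show False using bspec[OF irr m(2)] by simp
    qed
    ultimately show ?thesis by blast
  qed
  show ?thesis
  proof
    assume "realizes X F s C"
    then have "F \<subseteq> C \<and> C \<subseteq> X \<and> (\<exists>f. bij_betw f ?S C \<and> (\<forall>x\<in>F. f (Some x) = x) \<and>
          (\<forall>u\<in>?S. \<forall>v\<in>?S. s u v \<longleftrightarrow> f u < f v))" unfolding realizes_def .
    then obtain f where sub: "F \<subseteq> C" "C \<subseteq> X" and bij: "bij_betw f ?S C"
      and fix_: "\<forall>x\<in>F. f (Some x) = x"
      and ordf: "\<forall>u\<in>?S. \<forall>v\<in>?S. s u v \<longleftrightarrow> f u < f v"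
      by (elim conjE exE)
    define c where "c = f None"
    have cF: "c \<notin> F"
    proof
      assume cin: "c \<in> F"
      then have "f (Some c) = f None" using fix_ c_def by simp
      moreover have "Some c \<in> ?S" "None \<in> ?S" using cin by auto
      ultimately have "Some c = None" using inj_onD[OF bij_betw_imp_inj_on[OF bij]] by blast
      then show False by simp
    qed
    have "C = f ` ?S" using bij_betw_imp_surj_on[OF bij] by simp
    also have "\<dots> = insert c ((\<lambda>x. f (Some x)) ` F)" by (simp add: image_image c_def)
    also have "(\<lambda>x. f (Some x)) ` F = (\<lambda>x. x) ` F" by (rule image_cong) (simp_all add: fix_)
    finally have CC: "C = insert c F" by simp
    have "c \<in> X" using sub CC by auto
    moreover have "\<forall>x\<in>F. s (Some x) None \<longleftrightarrow> x < c"
    proof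
      fix x assume x: "x \<in> F"
      have "Some x \<in> ?S" "None \<in> ?S" using x by auto
      then have "s (Some x) None \<longleftrightarrow> f (Some x) < f None" using ordf by blast
      then show "s (Some x) None \<longleftrightarrow> x < c" using fix_ x c_def by simp
    qed
    ultimately show "\<exists>c\<in>X. c \<notin> F \<and> C = insert c F \<and> (\<forall>x\<in>F. s (Some x) None \<longleftrightarrow> x < c)"
      using cF CC by blast
  next
    assume "\<exists>c\<in>X. c \<notin> F \<and> C = insert c F \<and> (\<forall>x\<in>F. s (Some x) None \<longleftrightarrow> x < c)"
    then obtain c where c: "c \<in> X" "c \<notin> F" "C = insert c F" "\<forall>x\<in>F. s (Some x) None \<longleftrightarrow> x < c"
      by (elim bexE conjE)
    define f where "f u = (case u of None \<Rightarrow> c | Some x \<Rightarrow> x)" for u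
    have "bij_betw f ?S C"
      unfolding bij_betw_def
    proof
      show "inj_on f ?S"
      proof (rule inj_onI)
        fix u v assume "u \<in> ?S" "v \<in> ?S" "f u = f v"
        then show "u = v" using c(2) by (cases u; cases v) (auto simp: f_def)
      qed
      have "f ` ?S = insert c ((\<lambda>x. f (Some x)) ` F)" by (simp add: image_image f_def)
      also have "(\<lambda>x. f (Some x)) ` F = F" by (simp add: f_def)
      finally show "f ` ?S = C" using c(3) by simp
    qed
    moreover have "\<forall>x\<in>F. f (Some x) = x" by (simp add: f_def)
    moreover have "\<forall>u\<in>?S. \<forall>v\<in>?S. s u v \<longleftrightarrow> f u < f v"
    proof (intro ballI)
      fix u v assume u: "u \<in> ?S" and v: "v \<in> ?S"
      show "s u v \<longleftrightarrow> f u < f v"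
      proof (cases u)
        case None note u0 = this
        show ?thesis
        proof (cases v)
          case None then show ?thesis using u0 bspec[OF irr u] by (simp add: f_def)
        next
          case (Some y)
          then have y: "y \<in> F" using v by auto
          then have "y \<noteq> c" using c(2) by auto
          have e: "s (Some y) None \<longleftrightarrow> y < c" using c(4) y by blast
          have "s None (Some y) \<longleftrightarrow> c < y" using asym[OF y] e \<open>y \<noteq> c\<close> by auto
          then show ?thesis using u0 Some by (simp add: f_def)
        qed
      next
        case (Some x)
        note ux = this
        then have x: "x \<in> F" using u by auto
        show ?thesis
        proof (cases v)
          case None
          have e: "s (Some x) None \<longleftrightarrow> x < c" using c(4) x by blast
          then show ?thesis using ux None by (simp add: f_def)
        next
          case (Some y)
          then have y: "y \<in> F" using v by auto
          have e: "s (Some x) (Some y) \<longleftrightarrow> x < y" using ord x y by blast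
          then show ?thesis using ux Some by (simp add: f_def)
        qed
      qed
    qed
    ultimately have "\<exists>f. bij_betw f ?S C \<and> (\<forall>x\<in>F. f (Some x) = x) \<and>
          (\<forall>u\<in>?S. \<forall>v\<in>?S. s u v \<longleftrightarrow> f u < f v)"
      by (intro exI[of _ f] conjI)
    moreover have "F \<subseteq> C" "C \<subseteq> X" using c FX by auto
    ultimately show "realizes X F s C" unfolding realizes_def by (intro conjI)
  qed
qed

lemma init_seg_eq:
  fixes F D1 D2 :: "'a::linorder set"
  assumes "finite F" "D1 \<subseteq> F" "D2 \<subseteq> F"
    "\<forall>x\<in>D1. \<forall>y\<in>F. y < x \<longrightarrow> y \<in> D1" "\<forall>x\<in>D2. \<forall>y\<in>F. y < x \<longrightarrow> y \<in> D2"
    "card D1 = card D2"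
  shows "D1 = D2"
proof -
  have "D1 \<subseteq> D2 \<or> D2 \<subseteq> D1"
  proof (rule ccontr)
    assume "\<not> (D1 \<subseteq> D2 \<or> D2 \<subseteq> D1)"
    then obtain x y where "x \<in> D1" "x \<notin> D2" "y \<in> D2" "y \<notin> D1" by blast
    then have "x \<in> F" "y \<in> F" using assms(2,3) by auto
    then show False
    proof (cases x y rule: linorder_cases)
      case less then show False using assms(5) \<open>y \<in> D2\<close> \<open>x \<in> F\<close> \<open>x \<notin> D2\<close> by blast
    next
      case equal then show False using \<open>x \<in> D1\<close> \<open>y \<notin> D1\<close> by simp
    next
      case greater then show False using assms(4) \<open>x \<in> D1\<close> \<open>y \<in> F\<close> \<open>y \<notin> D1\<close> by blast
    qed
  qed
  moreover have "finite D1" "finite D2" using finite_subset[OF assms(2) assms(1)] finite_subset[OF assms(3) assms(1)] by auto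
  ultimately show ?thesis using assms(6) card_subset_eq by metis
qed

lemma ext_iff:
  assumes fin: "finite F" and FX: "F \<subseteq> X"
  shows "(\<forall>s. prime_ext F s \<longrightarrow> (\<exists>C. realizes X F s C \<and> P C)) \<longleftrightarrow>
         (\<forall>j\<le>card F. \<exists>c\<in>ivl X F j. P (insert c F))"
proof
  assume H: "\<forall>s. prime_ext F s \<longrightarrow> (\<exists>C. realizes X F s C \<and> P C)"
  show "\<forall>j\<le>card F. \<exists>c\<in>ivl X F j. P (insert c F)"
  proof (intro allI impI)
    fix j assume j: "j \<le> card F"
    define key where "key u = (case u of None \<Rightarrow> 2 * j | Some x \<Rightarrow> 2 * pos F x + 1)" for u
    define s where "s u v = (key u < key v)" for u v
    have ps: "prime_ext F s"
      unfolding prime_ext_def strict_linear_on_def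
    proof (intro conjI ballI impI)
      fix u v assume u: "u \<in> insert None (Some ` F)" and v: "v \<in> insert None (Some ` F)" and "u \<noteq> v"
      have "key u \<noteq> key v"
      proof (cases u)
        case None
        then obtain y where "v = Some y" "y \<in> F" using v \<open>u \<noteq> v\<close> by auto
        then show ?thesis using None by (simp add: key_def) presburger
      next
        case (Some x)
        note ux = this
        then have x: "x \<in> F" using u by auto
        show ?thesis
        proof (cases v)
          case None then show ?thesis using ux by (simp add: key_def) presburger
        next
          case (Some y)
          then have "y \<in> F" "x \<noteq> y" using v ux \<open>u \<noteq> v\<close> by auto
          then have "pos F x \<noteq> pos F y" using inj_onD[OF pos_inj[OF fin]] x by blast
          then show ?thesis using ux Some by (simp add: key_def)
        qed
      qed
      then show "s u v \<or> s v u" by (auto simp: s_def)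
    next
      fix x y assume "x \<in> F" "y \<in> F"
      then have "pos F x < pos F y \<longleftrightarrow> x < y"
        using pos_less_mono[OF fin, of x y] pos_less_mono[OF fin, of y x]
        by (cases x y rule: linorder_cases) auto
      then show "s (Some x) (Some y) = (x < y)" by (simp add: s_def key_def)
    qed (auto simp: s_def)
    then obtain C where r: "realizes X F s C" and "P C" using H by blast
    from r have "\<exists>c\<in>X. c \<notin> F \<and> C = insert c F \<and> (\<forall>x\<in>F. s (Some x) None \<longleftrightarrow> x < c)"
      by (rule iffD1[OF realizes_iff[OF ps FX]])
    then obtain c where c: "c \<in> X" "c \<notin> F" "C = insert c F" "\<forall>x\<in>F. s (Some x) None \<longleftrightarrow> x < c"
      by (elim bexE conjE)
    have "{x\<in>F. pos F x < j} = {x\<in>F. x < c}"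
    proof (rule Collect_cong)
      fix x
      show "(x \<in> F \<and> pos F x < j) = (x \<in> F \<and> x < c)"
      proof (cases "x \<in> F")
        case True
        then have "s (Some x) None \<longleftrightarrow> x < c" using c(4) by blast
        moreover have "s (Some x) None \<longleftrightarrow> pos F x < j" by (simp add: s_def key_def) linarith
        ultimately show ?thesis using True by simp
      qed simp
    qed
    then have "card {x\<in>F. x < c} = j" using card_pos_less[OF fin j] by simp
    then have "pos F c = j" by (simp add: pos_def)
    then have "c \<in> ivl X F j" using c(1,2) by (simp add: ivl_def)
    moreover have "P (insert c F)" using \<open>P C\<close> c(3) by simp
    ultimately show "\<exists>c\<in>ivl X F j. P (insert c F)" by blast
  qed
next
  assume H: "\<forall>j\<le>card F. \<exists>c\<in>ivl X F j. P (insert c F)"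
  show "\<forall>s. prime_ext F s \<longrightarrow> (\<exists>C. realizes X F s C \<and> P C)"
  proof (intro allI impI)
    fix s assume ps: "prime_ext F s"
    have sl: "strict_linear_on (insert None (Some ` F)) s" and ord: "\<forall>x\<in>F. \<forall>y\<in>F. s (Some x) (Some y) \<longleftrightarrow> x < y"
      using ps unfolding prime_ext_def by (rule conjunct1, rule conjunct2)
    have tr: "\<forall>x\<in>insert None (Some ` F). \<forall>y\<in>insert None (Some ` F). \<forall>z\<in>insert None (Some ` F). s x y \<longrightarrow> s y z \<longrightarrow> s x z"
      using sl unfolding strict_linear_on_def by (elim conjE)
    define D where "D = {x\<in>F. s (Some x) None}"
    have "card D \<le> card F" unfolding D_def by (rule card_mono[OF fin]) auto
    then obtain c where c: "c \<in> ivl X F (card D)" "P (insert c F)" using H by blast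
    have "{x\<in>F. x < c} = D"
    proof (rule init_seg_eq[OF fin])
      show "\<forall>x\<in>D. \<forall>y\<in>F. y < x \<longrightarrow> y \<in> D"
      proof (intro ballI impI)
        fix x y assume "x \<in> D" "y \<in> F" "y < x"
        then have xF: "x \<in> F" and sx: "s (Some x) None" by (simp_all add: D_def)
        have "s (Some y) (Some x) \<longleftrightarrow> y < x" using ord \<open>y \<in> F\<close> xF by blast
        then have sy: "s (Some y) (Some x)" using \<open>y < x\<close> by simp
        have m: "Some y \<in> insert None (Some ` F)" "Some x \<in> insert None (Some ` F)" "None \<in> insert None (Some ` F)"
          using xF \<open>y \<in> F\<close> by auto
        have "s (Some y) (Some x) \<longrightarrow> s (Some x) None \<longrightarrow> s (Some y) None"
          using bspec[OF bspec[OF bspec[OF tr m(1)] m(2)] m(3)] .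
        then have "s (Some y) None" using sx sy by simp
        then show "y \<in> D" using \<open>y \<in> F\<close> by (simp add: D_def)
      qed
      show "card {x \<in> F. x < c} = card D" using c(1) by (simp add: ivl_def pos_def)
    qed (auto simp: D_def)
    then have e: "\<forall>x\<in>F. s (Some x) None \<longleftrightarrow> x < c"
    proof (intro ballI)
      fix x assume x: "x \<in> F"
      assume eq: "{x \<in> F. x < c} = D"
      have "x \<in> {x \<in> F. x < c} \<longleftrightarrow> x \<in> D" by (simp only: eq)
      then show "s (Some x) None \<longleftrightarrow> x < c" using x by (simp add: D_def)
    qed
    have "c \<in> X" "c \<notin> F" using c(1) by (auto simp: ivl_def)
    then have "\<exists>c'\<in>X. c' \<notin> F \<and> insert c F = insert c' F \<and> (\<forall>x\<in>F. s (Some x) None \<longleftrightarrow> x < c')"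
      using e by (intro bexI[of _ c]) auto
    then have "realizes X F s (insert c F)"
      by (rule iffD2[OF realizes_iff[OF ps FX]])
    then show "\<exists>C. realizes X F s C \<and> P C" using c(2) by blast
  qed
qed



lemma rk_lim_iff:
  assumes "\<not> (\<exists>\<beta>. is_succ_of \<alpha> \<beta>)"
  shows "rk_ge X \<alpha> F \<longleftrightarrow> (\<forall>\<beta><\<alpha>. rk_ge X \<beta> F)"
proof
  assume "rk_ge X \<alpha> F"
  then show "\<forall>\<beta><\<alpha>. rk_ge X \<beta> F"
  proof (cases rule: rk_ge.cases)
    case lim then show ?thesis by simp
  next
    case (succ \<beta>) then show ?thesis using assms by auto
  qed
next
  assume "\<forall>\<beta><\<alpha>. rk_ge X \<beta> F"
  then show "rk_ge X \<alpha> F" using assms by (rule_tac rk_ge.lim) auto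
qed

lemma succ_unique: "is_succ_of \<alpha> \<beta> \<Longrightarrow> is_succ_of \<alpha> \<gamma> \<Longrightarrow> \<beta> = \<gamma>"
  unfolding is_succ_of_def by (meson order.antisym)

lemma rk_succ_iff:
  assumes "is_succ_of \<alpha> \<beta>"
  shows "rk_ge X \<alpha> F \<longleftrightarrow> (\<forall>s. prime_ext F s \<longrightarrow> (\<exists>C. realizes X F s C \<and> rk_ge X \<beta> C))"
proof
  assume "rk_ge X \<alpha> F"
  then show "\<forall>s. prime_ext F s \<longrightarrow> (\<exists>C. realizes X F s C \<and> rk_ge X \<beta> C)"
  proof (cases rule: rk_ge.cases)
    case lim then show ?thesis using assms by blast
  next
    case (succ \<beta>')
    then have "\<beta>' = \<beta>" using succ_unique[OF _ assms] by simp
    then show ?thesis using succ by simp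
  qed
next
  assume "\<forall>s. prime_ext F s \<longrightarrow> (\<exists>C. realizes X F s C \<and> rk_ge X \<beta> C)"
  then show "rk_ge X \<alpha> F" by (rule rk_ge.succ[OF assms])
qed

lemma rk_mono_aux:
  "\<forall>F. rk_ge X (\<alpha>::'o::wellorder) F \<longrightarrow> (\<forall>\<beta>\<le>\<alpha>. rk_ge X \<beta> F)"
proof (induction \<alpha> rule: less_induct)
  case (less \<alpha>)
  note IH = less.IH
  show ?case
  proof (intro allI impI)
    fix F \<beta> assume r: "rk_ge X \<alpha> F" and b: "\<beta> \<le> \<alpha>"
    show "rk_ge X \<beta> F"
    proof (cases "\<beta> = \<alpha>")
      case True then show ?thesis using r by simp
    next
      case False
      then have ba: "\<beta> < \<alpha>" using b by simp
      show ?thesis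
      proof (cases "\<exists>\<gamma>. is_succ_of \<alpha> \<gamma>")
        case False
        then show ?thesis using r ba rk_lim_iff[OF False, of X F] by simp
      next
        case True
        then obtain \<alpha>0 where a0: "is_succ_of \<alpha> \<alpha>0" by blast
        then have a0a: "\<alpha>0 < \<alpha>" and ba0: "\<beta> \<le> \<alpha>0" using ba unfolding is_succ_of_def by auto
        have R: "\<forall>s. prime_ext F s \<longrightarrow> (\<exists>C. realizes X F s C \<and> rk_ge X \<alpha>0 C)"
          using r rk_succ_iff[OF a0, of X F] by simp
        have "\<forall>\<gamma>\<le>\<alpha>0. rk_ge X \<gamma> F"
        proof (intro allI impI)
          fix \<gamma> assume "\<gamma> \<le> \<alpha>0"
          then show "rk_ge X \<gamma> F"
          proof (induction \<gamma> rule: less_induct)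
            case (less \<gamma>)
            show ?case
            proof (cases "\<exists>\<delta>. is_succ_of \<gamma> \<delta>")
              case False
              have "\<forall>\<delta><\<gamma>. rk_ge X \<delta> F" using less by auto
              then show ?thesis using rk_lim_iff[OF False, of X F] by simp
            next
              case True
              then obtain \<delta> where d: "is_succ_of \<gamma> \<delta>" by blast
              then have "\<delta> < \<alpha>0" using less.prems unfolding is_succ_of_def by auto
              have "\<forall>s. prime_ext F s \<longrightarrow> (\<exists>C. realizes X F s C \<and> rk_ge X \<delta> C)"
              proof (intro allI impI)
                fix s assume "prime_ext F s"
                then obtain C where "realizes X F s C" "rk_ge X \<alpha>0 C" using R by blast
                moreover have "rk_ge X \<delta> C"
                  using IH[OF a0a, rule_format, OF \<open>rk_ge X \<alpha>0 C\<close>, of \<delta>] \<open>\<delta> < \<alpha>0\<close> by simp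
                ultimately show "\<exists>C. realizes X F s C \<and> rk_ge X \<delta> C" by blast
              qed
              then show ?thesis using rk_succ_iff[OF d, of X F] by simp
            qed
          qed
        qed
        then show ?thesis using ba0 by blast
      qed
    qed
  qed
qed

lemma rk_mono: "rk_ge X \<alpha> F \<Longrightarrow> \<beta> \<le> \<alpha> \<Longrightarrow> rk_ge X \<beta> F"
  using rk_mono_aux by blast



lemma pos_insert:
  assumes "finite F" "c \<notin> F"
  shows "pos (insert c F) y = pos F y + (if c < y then 1 else 0)"
proof (cases "c < y")
  case True
  then have "{x\<in>insert c F. x < y} = insert c {x\<in>F. x < y}" by auto
  moreover have "c \<notin> {x\<in>F. x < y}" using assms(2) by simp
  moreover have "finite {x\<in>F. x < y}" using assms(1) by simp
  ultimately show ?thesis using True unfolding pos_def by simp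
next
  case False
  then have "{x\<in>insert c F. x < y} = {x\<in>F. x < y}" by auto
  then show ?thesis using False unfolding pos_def by simp
qed

lemma pos_empty: "pos {} y = 0" by (simp add: pos_def)

lemma ivl_empty: "ivl X {} 0 = X" by (simp add: ivl_def pos_empty)

lemma ivl_insert:
  assumes fin: "finite F" and c: "c \<in> ivl Y F j"
  shows "ivl Y (insert c F) k =
    (if k < j then ivl Y F k else if k = j then ivl (ivl Y F j) {c} 0
     else if k = Suc j then ivl (ivl Y F j) {c} 1 else ivl Y F (k - 1))"
proof -
  have cF: "c \<notin> F" and pc: "pos F c = j" and cY: "c \<in> Y" using c by (auto simp: ivl_def)
  have P1: "pos (insert c F) y = pos F y + (if c < y then 1 else 0)" for y
    using pos_insert[OF fin cF] .
  have P2: "pos {c} y = (if c < y then 1 else 0)" for y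
    using pos_insert[of "{}" c y] by (simp add: pos_empty)
  have lo: "y < c \<Longrightarrow> pos F y \<le> j" for y using pos_mono[OF fin, of y c] pc by simp
  have hi: "c < y \<Longrightarrow> j \<le> pos F y" for y using pos_mono[OF fin, of c y] pc by simp
  show ?thesis
  proof (rule set_eqI)
    fix y
    show "y \<in> ivl Y (insert c F) k \<longleftrightarrow> y \<in> (if k < j then ivl Y F k else if k = j then ivl (ivl Y F j) {c} 0
     else if k = Suc j then ivl (ivl Y F j) {c} 1 else ivl Y F (k - 1))"
    proof (cases "y \<in> Y \<and> y \<notin> F")
      case False
      then show ?thesis by (auto simp: ivl_def)
    next
      case True
      show ?thesis
      proof (cases y c rule: linorder_cases)
        case less
        then have "pos F y \<le> j" using lo by simp
        then show ?thesis using True less P1[of y] P2[of y] by (auto simp: ivl_def)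
      next
        case equal
        then show ?thesis using True pc by (auto simp: ivl_def)
      next
        case greater
        then have "j \<le> pos F y" using hi by simp
        then show ?thesis using True greater P1[of y] P2[of y] by (auto simp: ivl_def)
      qed
    qed
  qed
qed

lemma main:
  "\<forall>Y F. finite F \<longrightarrow> F \<subseteq> Y \<longrightarrow>
     (rk_ge Y (\<alpha>::'o::wellorder) F \<longleftrightarrow> (\<forall>j\<le>card F. rk_ge (ivl Y F j) \<alpha> {}))"
proof (induction \<alpha> rule: less_induct)
  case (less \<alpha>)
  show ?case
  proof (intro allI impI)
    fix Y :: "'a set" and F assume fin: "finite F" and FY: "F \<subseteq> Y"
    show "rk_ge Y \<alpha> F \<longleftrightarrow> (\<forall>j\<le>card F. rk_ge (ivl Y F j) \<alpha> {})"
    proof (cases "\<exists>\<beta>. is_succ_of \<alpha> \<beta>")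
      case False
      have "rk_ge Y \<alpha> F \<longleftrightarrow> (\<forall>\<beta><\<alpha>. rk_ge Y \<beta> F)" using rk_lim_iff[OF False] .
      also have "\<dots> \<longleftrightarrow> (\<forall>\<beta><\<alpha>. \<forall>j\<le>card F. rk_ge (ivl Y F j) \<beta> {})"
      proof -
        have e: "\<And>\<beta>. \<beta> < \<alpha> \<Longrightarrow> rk_ge Y \<beta> F = (\<forall>j\<le>card F. rk_ge (ivl Y F j) \<beta> {})"
          using less.IH[rule_format, OF _ fin FY] .
        show ?thesis using e by simp
      qed
      also have "\<dots> \<longleftrightarrow> (\<forall>j\<le>card F. \<forall>\<beta><\<alpha>. rk_ge (ivl Y F j) \<beta> {})" by auto
      also have "\<dots> \<longleftrightarrow> (\<forall>j\<le>card F. rk_ge (ivl Y F j) \<alpha> {})"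
      proof -
        have e: "\<And>j. rk_ge (ivl Y F j) \<alpha> {} = (\<forall>\<beta><\<alpha>. rk_ge (ivl Y F j) \<beta> {})"
          by (rule rk_lim_iff[OF False])
        show ?thesis by (simp only: e)
      qed
      finally show ?thesis .
    next
      case True
      then obtain \<beta> where b: "is_succ_of \<alpha> \<beta>" by blast
      then have ba: "\<beta> < \<alpha>" unfolding is_succ_of_def by simp
      note IH = less.IH[OF ba]
      have A: "rk_ge Y \<alpha> F \<longleftrightarrow> (\<forall>j\<le>card F. \<exists>c\<in>ivl Y F j. rk_ge Y \<beta> (insert c F))"
        using rk_succ_iff[OF b, of Y F] ext_iff[OF fin FY, of "rk_ge Y \<beta>"] by simp
      have B: "rk_ge (ivl Y F j) \<alpha> {} \<longleftrightarrow> (\<exists>c\<in>ivl Y F j. rk_ge (ivl Y F j) \<beta> {c})" for j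
        using rk_succ_iff[OF b, of "ivl Y F j" "{}"] ext_iff[of "{}" "ivl Y F j" "rk_ge (ivl Y F j) \<beta>"]
        by (simp add: ivl_empty)
      have B2: "rk_ge (ivl Y F j) \<beta> {c} \<longleftrightarrow>
          rk_ge (ivl (ivl Y F j) {c} 0) \<beta> {} \<and> rk_ge (ivl (ivl Y F j) {c} 1) \<beta> {}"
        if "c \<in> ivl Y F j" for j c
      proof -
        have "rk_ge (ivl Y F j) \<beta> {c} \<longleftrightarrow> (\<forall>k\<le>1. rk_ge (ivl (ivl Y F j) {c} k) \<beta> {})"
          using IH[rule_format, of "{c}" "ivl Y F j"] that by simp
        also have "\<dots> \<longleftrightarrow> rk_ge (ivl (ivl Y F j) {c} 0) \<beta> {} \<and> rk_ge (ivl (ivl Y F j) {c} 1) \<beta> {}"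
          by (auto simp: le_Suc_eq)
        finally show ?thesis .
      qed
      have Cc: "rk_ge Y \<beta> (insert c F) \<longleftrightarrow> (\<forall>k\<le>Suc (card F). rk_ge (ivl Y (insert c F) k) \<beta> {})"
        if "c \<in> ivl Y F j" for j c
      proof -
        have "c \<notin> F" "c \<in> Y" using that by (auto simp: ivl_def)
        then have "card (insert c F) = Suc (card F)" "insert c F \<subseteq> Y" using fin FY by auto
        then show ?thesis using IH[rule_format, of "insert c F" Y] fin by simp
      qed
      show ?thesis
      proof
        assume "rk_ge Y \<alpha> F"
        then have H: "\<forall>j\<le>card F. \<exists>c\<in>ivl Y F j. rk_ge Y \<beta> (insert c F)" using A by simp
        show "\<forall>j\<le>card F. rk_ge (ivl Y F j) \<alpha> {}"
        proof (intro allI impI)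
          fix j assume j: "j \<le> card F"
          then obtain c where c: "c \<in> ivl Y F j" "rk_ge Y \<beta> (insert c F)" using H by blast
          then have all: "\<forall>k\<le>Suc (card F). rk_ge (ivl Y (insert c F) k) \<beta> {}" using Cc[OF c(1)] by simp
          have "rk_ge (ivl Y (insert c F) j) \<beta> {}" using all j by simp
          then have l: "rk_ge (ivl (ivl Y F j) {c} 0) \<beta> {}" using ivl_insert[OF fin c(1), of j] by simp
          have "rk_ge (ivl Y (insert c F) (Suc j)) \<beta> {}" using all j by simp
          then have u: "rk_ge (ivl (ivl Y F j) {c} 1) \<beta> {}" using ivl_insert[OF fin c(1), of "Suc j"] by simp
          have "rk_ge (ivl Y F j) \<beta> {c}" using B2[OF c(1)] l u by simp
          then show "rk_ge (ivl Y F j) \<alpha> {}" using B[of j] c(1) by blast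
        qed
      next
        assume H: "\<forall>j\<le>card F. rk_ge (ivl Y F j) \<alpha> {}"
        then have Hb: "\<forall>j\<le>card F. rk_ge (ivl Y F j) \<beta> {}"
          using rk_mono[OF _ less_imp_le[OF ba]] by blast
        have "\<forall>j\<le>card F. \<exists>c\<in>ivl Y F j. rk_ge Y \<beta> (insert c F)"
        proof (intro allI impI)
          fix j assume j: "j \<le> card F"
          then have "rk_ge (ivl Y F j) \<alpha> {}" using H by simp
          then obtain c where c: "c \<in> ivl Y F j" "rk_ge (ivl Y F j) \<beta> {c}" using B[of j] by blast
          then have l: "rk_ge (ivl (ivl Y F j) {c} 0) \<beta> {}" and u: "rk_ge (ivl (ivl Y F j) {c} 1) \<beta> {}"
            using B2[OF c(1)] by simp_all
          have "\<forall>k\<le>Suc (card F). rk_ge (ivl Y (insert c F) k) \<beta> {}"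
          proof (intro allI impI)
            fix k assume k: "k \<le> Suc (card F)"
            show "rk_ge (ivl Y (insert c F) k) \<beta> {}"
            proof (cases "k < j")
              case True then show ?thesis using ivl_insert[OF fin c(1), of k] Hb j by simp
            next
              case False
              show ?thesis
              proof (cases "k = j")
                case True then show ?thesis using ivl_insert[OF fin c(1), of k] l by simp
              next
                case False2: False
                show ?thesis
                proof (cases "k = Suc j")
                  case True then show ?thesis using ivl_insert[OF fin c(1), of k] u by simp
                next
                  case False3: False
                  have "k - 1 \<le> card F" using k by simp
                  then show ?thesis using ivl_insert[OF fin c(1), of k] Hb \<open>\<not> k < j\<close> False2 False3 by simp
                qed
              qed
            qed
          qed
          then show "\<exists>c\<in>ivl Y F j. rk_ge Y \<beta> (insert c F)" using Cc[OF c(1)] c(1) by blast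
        qed
        then show "rk_ge Y \<alpha> F" using A by simp
      qed
    qed
  qed
qed


theorem proposition6p5:
  fixes Y F :: "'a::linorder set" and \<alpha> :: "'o::wellorder"
  assumes "countable Y" and "finite F" and "F \<subseteq> Y"
  shows "(rk_ge Y \<alpha> F \<longleftrightarrow> (\<forall>j\<le>card F. rk_ge (interval Y F j) \<alpha> {}))
         \<and> (rk Y F :: 'o set) = (\<Inter>j\<le>card F. rk (interval Y F j) {})"
proof -
  have iff: "rk_ge Y \<beta> F \<longleftrightarrow> (\<forall>j\<le>card F. rk_ge (interval Y F j) \<beta> {})" for \<beta> :: 'o
  proof -
    have "rk_ge Y \<beta> F \<longleftrightarrow> (\<forall>j\<le>card F. rk_ge (ivl Y F j) \<beta> {})"
      using main[rule_format, of F Y \<beta>] assms(2,3) by simp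
    also have "\<dots> \<longleftrightarrow> (\<forall>j\<le>card F. rk_ge (interval Y F j) \<beta> {})"
      using interval_ivl[OF assms(2)] by simp
    finally show ?thesis .
  qed
  have "(rk Y F :: 'o set) = (\<Inter>j\<le>card F. rk (interval Y F j) {})"
    unfolding rk_def using iff by auto
  then show ?thesis using iff by simp
qed

end
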